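(* For $k\ge0$ let $\mathcal R^{(N,k)}(x)=\mathcal R^{(N+k-1)}(x)\cdots\mathcal R^{(N)}(x)$ (with $\mathcal R^{(N,0)}=\mathrm{Id}$) and $D_k^{(N)}(x)=\mathcal R^{(N,k)}(x)^{-1}\mathcal D^{(N+k)}(x)\mathcal R^{(N,k)}(x)$, so that $W_1^{(N+k)}(x.E)={\rm Tr}\,D_k^{(N)}(x)M^{(N)}(x.E)$. Then there exist polynomials $\alpha_k^{(N)}(x)\in\mathbb C[x]$, $k=0,\dots,\dim\mathfrak g$, not all zero and independent of $E$, such that $\sum_k\alpha_k^{(N)}D_k^{(N)}=0$ and for every $E\in\mathfrak g$ $$\sum_{k=0}^{\dim\mathfrak g}\alpha_k^{(N)}(x)W_1^{(N+k)}(x.E)=0 .$$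
   Context: Let $G\subset GL(r,\mathbb C)$ be a complex reductive Lie group given in a faithful matrix representation, with Lie algebra $\mathfrak g\subset\mathfrak{gl}(r,\mathbb C)$; ${\rm Tr}$ is the matrix trace. For each integer $N$ let $\mathcal D^{(N)}(x)\in\mathfrak g$ be rational in $x$, let $\Psi^{(N)}(x)$ be an invertible $G$-valued solution of $\frac{d}{dx}\Psi^{(N)}=\mathcal D^{(N)}\Psi^{(N)}$ (on a common simply connected domain avoiding all poles), and assume $\Psi^{(N+1)}(x)=\mathcal R^{(N)}(x)\Psi^{(N)}(x)$ with $\mathcal R^{(N)}(x)$ an invertible matrix, rational in $x$, with rational inverse. For $E\in\mathfrak g$, $M^{(N)}(x.E)=\Psi^{(N)}(x)E\Psi^{(N)}(x)^{-1}$ and $W_1^{(N)}(x.E)={\rm Tr}\,\mathcal D^{(N)}(x)M^{(N)}(x.E)$. *)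

theory Defs
  imports "HOL-Analysis.Analysis" "HOL-Computational_Algebra.Polynomial"
begin

text \<open>Complex r x r matrices are modelled as complex^'n^'n with r = CARD('n).\<close>

definition mscale :: "complex \<Rightarrow> complex^'n^'n \<Rightarrow> complex^'n^'n" where
  "mscale c A = (\<chi> i j. c * A$i$j)"

definition cdim :: "(complex^'n^'n) set \<Rightarrow> nat" where
  "cdim V = vector_space.dim mscale V"

definition csubspace_vec :: "(complex^'n) set \<Rightarrow> bool" where
  "csubspace_vec S \<longleftrightarrow> 0 \<in> S \<and> (\<forall>u\<in>S. \<forall>v\<in>S. u + v \<in> S) \<and> (\<forall>c u. u \<in> S \<longrightarrow> c *s u \<in> S)"

definition matrix_group :: "(complex^'n^'n) set \<Rightarrow> bool" where
  "matrix_group G \<longleftrightarrow> G \<subseteq> {A. invertible A} \<and> mat 1 \<in> G \<and>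
     (\<forall>A\<in>G. \<forall>B\<in>G. A ** B \<in> G) \<and> (\<forall>A\<in>G. matrix_inv A \<in> G)"

text \<open>Lie group given as a (relatively) closed subgroup of GL(r,C).\<close>
definition closed_matrix_group :: "(complex^'n^'n) set \<Rightarrow> bool" where
  "closed_matrix_group G \<longleftrightarrow> matrix_group G \<and>
     (\<forall>A. invertible A \<and> A \<in> closure G \<longrightarrow> A \<in> G)"

definition lie_algebra :: "(complex^'n^'n) set \<Rightarrow> (complex^'n^'n) set" where
  "lie_algebra G = {E. \<exists>\<gamma>::real \<Rightarrow> complex^'n^'n. (\<forall>t. \<gamma> t \<in> G) \<and> \<gamma> 0 = mat 1 \<and>
       (\<gamma> has_vector_derivative E) (at 0)}"

text \<open>Complex reductive matrix group: closed subgroup of GL(r,C) with complex Lie algebra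
  whose defining (faithful) representation on C^r is completely reducible.\<close>
definition complex_reductive_matrix_group :: "(complex^'n^'n) set \<Rightarrow> bool" where
  "complex_reductive_matrix_group G \<longleftrightarrow> closed_matrix_group G \<and>
     (\<forall>c. \<forall>E\<in>lie_algebra G. mscale c E \<in> lie_algebra G) \<and>
     (\<forall>S. csubspace_vec S \<and> (\<forall>g\<in>G. \<forall>v\<in>S. g *v v \<in> S) \<longrightarrow>
        (\<exists>T. csubspace_vec T \<and> (\<forall>g\<in>G. \<forall>v\<in>T. g *v v \<in> T) \<and> S \<inter> T = {0} \<and>
             (\<forall>w. \<exists>u\<in>S. \<exists>v\<in>T. w = u + v)))"

definition rational_on :: "complex set \<Rightarrow> (complex \<Rightarrow> complex) \<Rightarrow> bool" where
  "rational_on U f \<longleftrightarrow> (\<exists>p q :: complex poly. \<forall>x\<in>U. poly q x \<noteq> 0 \<and> f x = poly p x / poly q x)"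

definition rational_mat_on :: "complex set \<Rightarrow> (complex \<Rightarrow> complex^'n^'n) \<Rightarrow> bool" where
  "rational_mat_on U F \<longleftrightarrow> (\<forall>i j. rational_on U (\<lambda>x. F x $ i $ j))"

definition Mfun :: "(int \<Rightarrow> complex \<Rightarrow> complex^'n^'n) \<Rightarrow> int \<Rightarrow> complex \<Rightarrow> complex^'n^'n \<Rightarrow> complex^'n^'n" where
  "Mfun \<Psi> N x E = \<Psi> N x ** E ** matrix_inv (\<Psi> N x)"

definition W1 :: "(int \<Rightarrow> complex \<Rightarrow> complex^'n^'n) \<Rightarrow> (int \<Rightarrow> complex \<Rightarrow> complex^'n^'n) \<Rightarrow>
    int \<Rightarrow> complex \<Rightarrow> complex^'n^'n \<Rightarrow> complex" where
  "W1 D \<Psi> N x E = trace (D N x ** Mfun \<Psi> N x E)"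

fun Rprod :: "(int \<Rightarrow> complex \<Rightarrow> complex^'n^'n) \<Rightarrow> int \<Rightarrow> nat \<Rightarrow> complex \<Rightarrow> complex^'n^'n" where
  "Rprod R N 0 x = mat 1"
| "Rprod R N (Suc k) x = R (N + int k) x ** Rprod R N k x"

definition Dk :: "(int \<Rightarrow> complex \<Rightarrow> complex^'n^'n) \<Rightarrow> (int \<Rightarrow> complex \<Rightarrow> complex^'n^'n) \<Rightarrow>
    int \<Rightarrow> nat \<Rightarrow> complex \<Rightarrow> complex^'n^'n" where
  "Dk R D N k x = matrix_inv (Rprod R N k x) ** D (N + int k) x ** Rprod R N k x"

end

theory Submission
  imports Defs
begin


lemma minv_props:
  fixes A :: "'a::semiring_1^'n^'n"
  assumes "invertible A"
  shows "A ** matrix_inv A = mat 1" "matrix_inv A ** A = mat 1"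
  using someI_ex[OF assms[unfolded invertible_def]] unfolding matrix_inv_def by auto

lemma minv_unique:
  fixes A B :: "'a::semiring_1^'n^'n"
  assumes "A ** B = mat 1" "B ** A = mat 1"
  shows "matrix_inv A = B"
proof -
  have inv: "invertible A" using assms unfolding invertible_def by blast
  have "matrix_inv A = (B ** A) ** matrix_inv A" using assms by (simp add: matrix_mul_lid)
  also have "\<dots> = B ** (A ** matrix_inv A)" by (simp add: matrix_mul_assoc)
  also have "\<dots> = B" using minv_props[OF inv] by (simp add: matrix_mul_rid)
  finally show ?thesis .
qed

lemma linear_conj:
  fixes g h :: "complex^'n^'n"
  shows "bounded_linear (\<lambda>A. g ** A ** h)"
proof -
  have sc: "r *\<^sub>R (z::complex) = of_real r * z" for r z by (simp add: scaleR_conv_of_real)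
  have "linear (\<lambda>A. g ** A ** h)"
    by (rule linearI)
       (simp_all add: vec_eq_iff matrix_matrix_mult_def sum_distrib_left sum_distrib_right
          sum.distrib algebra_simps vector_scaleR_component sc)
  then show ?thesis using linear_conv_bounded_linear by blast
qed


lemma conj_lie:
  fixes G :: "(complex^'n^'n) set"
  assumes mg: "matrix_group G" and g: "g \<in> G" and h: "h \<in> G" and gh: "g ** h = mat 1"
    and E: "E \<in> lie_algebra G"
  shows "g ** E ** h \<in> lie_algebra G"
proof -
  obtain \<gamma> where \<gamma>: "\<forall>t. \<gamma> t \<in> G" "\<gamma> 0 = mat 1" "(\<gamma> has_vector_derivative E) (at 0)"
    using E unfolding lie_algebra_def by blast
  have "\<forall>t. g ** \<gamma> t ** h \<in> G" using mg g h \<gamma>(1) unfolding matrix_group_def by blast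
  moreover have "g ** \<gamma> 0 ** h = mat 1" using gh \<gamma>(2) by (simp add: matrix_mul_rid)
  moreover have "((\<lambda>t. g ** \<gamma> t ** h) has_vector_derivative g ** E ** h) (at 0)"
    by (rule bounded_linear.has_vector_derivative[OF linear_conj \<gamma>(3)])
  ultimately show ?thesis unfolding lie_algebra_def
    by (intro CollectI exI[of _ "\<lambda>t. g ** \<gamma> t ** h"]) blast
qed



lemma span_elim:
  fixes d :: "'k \<Rightarrow> complex" and B :: "'k \<Rightarrow> 'i \<Rightarrow> complex"
  assumes "finite K" "k0 \<in> K" "B k0 i0 \<noteq> 0" "(\<Sum>k\<in>K. d k * B k i0) = 0"
  shows "(\<Sum>k\<in>K. d k * B k i) = (\<Sum>k\<in>K-{k0}. d k * (B k i - B k i0 / B k0 i0 * B k0 i))"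
proof -
  let ?K = "K - {k0}"
  have s: "(\<Sum>k\<in>K. f k) = f k0 + (\<Sum>k\<in>?K. f k)" for f :: "'k \<Rightarrow> complex"
    using assms(1,2) by (simp add: sum.remove)
  have "d k0 * B k0 i0 = - (\<Sum>k\<in>?K. d k * B k i0)"
    using assms(4) s[of "\<lambda>k. d k * B k i0"] by (simp add: add_eq_0_iff)
  then have dk0: "d k0 = - (\<Sum>k\<in>?K. d k * B k i0) / B k0 i0"
    using assms(3) by (simp add: field_simps)
  have "(\<Sum>k\<in>?K. d k * (B k i - B k i0 / B k0 i0 * B k0 i)) =
      (\<Sum>k\<in>?K. d k * B k i) - (\<Sum>k\<in>?K. d k * B k i0) / B k0 i0 * B k0 i"
    by (simp add: algebra_simps sum_subtractf sum_distrib_left sum_distrib_right sum_divide_distrib)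
  then show ?thesis using s[of "\<lambda>k. d k * B k i"] dk0 by simp
qed

lemma poly_relation:
  fixes p :: "'j \<Rightarrow> 'i \<Rightarrow> complex poly" and B :: "'k \<Rightarrow> 'i \<Rightarrow> complex"
  assumes "finite I" "finite J" "finite K" "card K < card J" "infinite S"
    and "\<forall>j\<in>J. \<forall>x\<in>S. \<exists>c. \<forall>i\<in>I. poly (p j i) x = (\<Sum>k\<in>K. c k * B k i)"
  shows "\<exists>c. (\<exists>j\<in>J. c j \<noteq> 0) \<and> (\<forall>i\<in>I. (\<Sum>j\<in>J. c j * p j i) = 0)"
  using assms
proof (induction I arbitrary: J K p B rule: finite_induct)
  case empty
  then have "J \<noteq> {}" by auto
  then show ?case by (intro exI[of _ "\<lambda>_. 1"]) auto
next
  case (insert i0 I)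
  show ?case
  proof (cases "\<forall>j\<in>J. p j i0 = 0")
    case True
    have "\<forall>j\<in>J. \<forall>x\<in>S. \<exists>c. \<forall>i\<in>I. poly (p j i) x = (\<Sum>k\<in>K. c k * B k i)"
      using insert.prems(5) by blast
    then obtain c where c: "\<exists>j\<in>J. c j \<noteq> 0" "\<forall>i\<in>I. (\<Sum>j\<in>J. c j * p j i) = 0"
      using insert.IH[of J K p B] insert.prems by blast
    show ?thesis using c True by (intro exI[of _ c]) auto
  next
    case False
    then obtain j0 where j0: "j0 \<in> J" "p j0 i0 \<noteq> 0" by blast
    define a where "a = p j0 i0"
    have "\<exists>k0\<in>K. B k0 i0 \<noteq> 0"
    proof (rule ccontr)
      assume "\<not> ?thesis"
      then have "\<forall>x\<in>S. poly a x = 0" using insert.prems(5) j0(1) unfolding a_def by fastforce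
      then have "S \<subseteq> {x. poly a x = 0}" by auto
      moreover have "finite {x. poly a x = 0}" using poly_roots_finite j0(2) a_def by blast
      ultimately show False using insert.prems(4) finite_subset by blast
    qed
    then obtain k0 where k0: "k0 \<in> K" "B k0 i0 \<noteq> 0" by blast
    define B' where "B' k i = B k i - B k i0 / B k0 i0 * B k0 i" for k i
    define w where "w j i = a * p j i - p j i0 * p j0 i" for j i
    have cardK: "card (K - {k0}) < card (J - {j0})"
      proof -
      have "K \<noteq> {}" using k0 by blast
      then have "card K > 0" using insert.prems(2) by (simp add: card_gt_0_iff)
      then show ?thesis using insert.prems(1-3) k0 j0 by (simp add: card_Diff_singleton)
    qed
    have hyp: "\<forall>j\<in>J-{j0}. \<forall>x\<in>S. \<exists>c. \<forall>i\<in>I. poly (w j i) x = (\<Sum>k\<in>K-{k0}. c k * B' k i)"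
    proof (intro ballI)
      fix j x assume j: "j \<in> J - {j0}" and x: "x \<in> S"
      obtain c1 where c1: "\<forall>i\<in>insert i0 I. poly (p j i) x = (\<Sum>k\<in>K. c1 k * B k i)"
        using insert.prems(5) j x by blast
      obtain c0 where c0: "\<forall>i\<in>insert i0 I. poly (p j0 i) x = (\<Sum>k\<in>K. c0 k * B k i)"
        using insert.prems(5) j0 x by blast
      define d where "d k = poly a x * c1 k - poly (p j i0) x * c0 k" for k
      have wd: "poly (w j i) x = (\<Sum>k\<in>K. d k * B k i)" if "i \<in> insert i0 I" for i
      proof -
        have e1: "poly (p j i) x = (\<Sum>k\<in>K. c1 k * B k i)" using c1 that by blast
        have e0: "poly (p j0 i) x = (\<Sum>k\<in>K. c0 k * B k i)" using c0 that by blast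
        have "poly (w j i) x = poly a x * (\<Sum>k\<in>K. c1 k * B k i) - poly (p j i0) x * (\<Sum>k\<in>K. c0 k * B k i)"
          unfolding w_def poly_diff poly_mult e1 e0 ..
        also have "\<dots> = (\<Sum>k\<in>K. d k * B k i)"
          unfolding d_def by (simp add: algebra_simps sum_subtractf sum_distrib_left)
        finally show ?thesis .
      qed
      have "(\<Sum>k\<in>K. d k * B k i0) = 0" using wd[of i0] by (simp add: w_def a_def)
      then have "poly (w j i) x = (\<Sum>k\<in>K-{k0}. d k * B' k i)" if "i\<in>I" for i
        using wd[of i] that span_elim[of K k0 B i0 d i, OF insert.prems(2) k0] unfolding B'_def by auto
      then show "\<exists>c. \<forall>i\<in>I. poly (w j i) x = (\<Sum>k\<in>K-{k0}. c k * B' k i)" by blast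
    qed
    obtain c' where c': "\<exists>j\<in>J-{j0}. c' j \<noteq> 0" "\<forall>i\<in>I. (\<Sum>j\<in>J-{j0}. c' j * w j i) = 0"
      using insert.IH[of "J-{j0}" "K-{k0}" w B'] insert.prems cardK hyp by auto
    define c where "c j = (if j = j0 then - (\<Sum>j\<in>J-{j0}. c' j * p j i0) else a * c' j)" for j
    have sumc: "(\<Sum>j\<in>J. c j * p j i) = (\<Sum>j\<in>J-{j0}. c' j * w j i)" for i
    proof -
      have "(\<Sum>j\<in>J. c j * p j i) = c j0 * p j0 i + (\<Sum>j\<in>J-{j0}. c j * p j i)"
        using insert.prems(1) j0(1) by (simp add: sum.remove)
      also have "(\<Sum>j\<in>J-{j0}. c j * p j i) = (\<Sum>j\<in>J-{j0}. a * c' j * p j i)"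
        by (rule sum.cong) (auto simp: c_def)
      finally show ?thesis unfolding w_def c_def
        by (simp add: algebra_simps sum_subtractf sum_distrib_left sum_distrib_right)
    qed
    show ?thesis
    proof (intro exI[of _ c] conjI)
      from c'(1) obtain j1 where "j1 \<in> J - {j0}" "c' j1 \<noteq> 0" by blast
      then show "\<exists>j\<in>J. c j \<noteq> 0" using j0(2) unfolding c_def a_def by (intro bexI[of _ j1]) auto
      show "\<forall>i\<in>insert i0 I. (\<Sum>j\<in>J. c j * p j i) = 0"
      proof
        fix i assume "i \<in> insert i0 I"
        then consider "i = i0" | "i \<in> I" by blast
        then show "(\<Sum>j\<in>J. c j * p j i) = 0"
        proof cases
          case 1 then show ?thesis unfolding sumc w_def a_def by (simp add: algebra_simps)
        next
          case 2 then show ?thesis using sumc c'(2) by simp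
        qed
      qed
    qed
  qed
qed



lemma rat_const: "rational_on U (\<lambda>x. c)"
  unfolding rational_on_def by (intro exI[of _ "[:c:]"] exI[of _ 1]) auto

lemma rat_add:
  assumes "rational_on U f" "rational_on U g"
  shows "rational_on U (\<lambda>x. f x + g x)"
proof -
  obtain p1 q1 where 1: "\<forall>x\<in>U. poly q1 x \<noteq> 0 \<and> f x = poly p1 x / poly q1 x"
    using assms(1) unfolding rational_on_def by blast
  obtain p2 q2 where 2: "\<forall>x\<in>U. poly q2 x \<noteq> 0 \<and> g x = poly p2 x / poly q2 x"
    using assms(2) unfolding rational_on_def by blast
  show ?thesis unfolding rational_on_def
    by (intro exI[of _ "p1 * q2 + p2 * q1"] exI[of _ "q1 * q2"]) (use 1 2 in \<open>auto simp: field_simps\<close>)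
qed

lemma rat_mult:
  assumes "rational_on U f" "rational_on U g"
  shows "rational_on U (\<lambda>x. f x * g x)"
proof -
  obtain p1 q1 where 1: "\<forall>x\<in>U. poly q1 x \<noteq> 0 \<and> f x = poly p1 x / poly q1 x"
    using assms(1) unfolding rational_on_def by blast
  obtain p2 q2 where 2: "\<forall>x\<in>U. poly q2 x \<noteq> 0 \<and> g x = poly p2 x / poly q2 x"
    using assms(2) unfolding rational_on_def by blast
  show ?thesis unfolding rational_on_def
    by (intro exI[of _ "p1 * p2"] exI[of _ "q1 * q2"]) (use 1 2 in \<open>auto simp: field_simps\<close>)
qed

lemma rat_sum:
  assumes "finite A" "\<forall>a\<in>A. rational_on U (f a)"
  shows "rational_on U (\<lambda>x. \<Sum>a\<in>A. f a x)"
  using assms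
proof (induction A rule: finite_induct)
  case empty then show ?case using rat_const[of U 0] by simp
next
  case (insert a A)
  then show ?case using rat_add[of U "f a" "\<lambda>x. \<Sum>a\<in>A. f a x"] by simp
qed

lemma ratm_mult:
  assumes "rational_mat_on U A" "rational_mat_on U B"
  shows "rational_mat_on U (\<lambda>x. A x ** B x)"
  unfolding rational_mat_on_def matrix_matrix_mult_def vec_lambda_beta
proof (intro allI)
  fix i j
  show "rational_on U (\<lambda>x. \<Sum>k\<in>UNIV. A x $ i $ k * B x $ k $ j)"
    using assms unfolding rational_mat_on_def by (intro rat_sum rat_mult ballI) auto
qed

lemma ratm_const: "rational_mat_on U (\<lambda>x. C)"
  unfolding rational_mat_on_def using rat_const by blast

lemma common_denom:
  assumes "finite T" "\<forall>t\<in>T. rational_on U (f t)"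
  shows "\<exists>q P. (\<forall>x\<in>U. poly q x \<noteq> 0) \<and> (\<forall>t\<in>T. \<forall>x\<in>U. f t x = poly (P t) x / poly q x)"
  using assms
proof (induction T rule: finite_induct)
  case empty then show ?case by (intro exI[of _ 1]) auto
next
  case (insert t0 T)
  then obtain q P where qP: "\<forall>x\<in>U. poly q x \<noteq> 0" "\<forall>t\<in>T. \<forall>x\<in>U. f t x = poly (P t) x / poly q x"
    by auto
  obtain p0 q0 where 0: "\<forall>x\<in>U. poly q0 x \<noteq> 0 \<and> f t0 x = poly p0 x / poly q0 x"
    using insert.prems unfolding rational_on_def by blast
  show ?case
    by (intro exI[of _ "q * q0"] exI[of _ "\<lambda>t. if t = t0 then p0 * q else P t * q0"])
       (use qP 0 in \<open>auto simp: field_simps\<close>)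
qed



lemma vs: "vector_space (mscale :: complex \<Rightarrow> complex^'n^'n \<Rightarrow> complex^'n^'n)"
  by unfold_locales (simp_all add: mscale_def vec_eq_iff algebra_simps)

lemma double_delta: "(\<Sum>x\<in>UNIV. \<Sum>y\<in>UNIV. (if a = x \<and> b = y then f x y else 0)) = (f a b :: complex)" for f :: "'a::finite \<Rightarrow> 'b::finite \<Rightarrow> complex"
proof -
  have "(\<Sum>x\<in>UNIV. \<Sum>y\<in>UNIV. (if a = x \<and> b = y then f x y else 0)) = (\<Sum>x\<in>UNIV. if a = x then f x b else 0)"
    by (rule sum.cong[OF refl]) (auto simp: sum.delta')
  also have "\<dots> = f a b" by (simp add: sum.delta sum.delta')
  finally show ?thesis .
qed

lemma mi: "(c::complex) * (if P then 1 else 0) = (if P then c else 0)" by simp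

lemma all_in_span:
  fixes A :: "complex^'n^'n"
  shows "A \<in> module.span mscale (range (\<lambda>(i::'n,j::'n). (\<chi> a b. if a = i \<and> b = j then 1 else 0) :: complex^'n^'n))"
proof -
  interpret V: vector_space "mscale :: complex \<Rightarrow> complex^'n^'n \<Rightarrow> complex^'n^'n" by (rule vs)
  let ?E = "\<lambda>(i::'n,j::'n). (\<chi> a b. if a = i \<and> b = j then 1 else 0) :: complex^'n^'n"
  have eq: "A = (\<Sum>i\<in>UNIV. \<Sum>j\<in>UNIV. mscale (A$i$j) (?E (i,j)))"
    by (simp add: vec_eq_iff sum_component mscale_def mi double_delta)
  have "(\<Sum>i\<in>UNIV. \<Sum>j\<in>UNIV. mscale (A$i$j) (?E (i,j))) \<in> V.span (range ?E)"
    by (intro V.span_sum V.span_scale V.span_base) auto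
  then show ?thesis using eq by simp
qed

lemma trace_comb:
  fixes X :: "'k \<Rightarrow> complex^'n^'n"
  shows "(\<Sum>k\<in>A. a k * trace (X k ** M)) = trace ((\<Sum>k\<in>A. mscale (a k) (X k)) ** M)"
  by (simp add: trace_def matrix_matrix_mult_def sum_component mscale_def sum_distrib_left
      sum_distrib_right mult.assoc sum.swap[of _ A])



fun Rinvprod :: "(int \<Rightarrow> complex \<Rightarrow> complex^'n^'n) \<Rightarrow> int \<Rightarrow> nat \<Rightarrow> complex \<Rightarrow> complex^'n^'n" where
  "Rinvprod R N 0 x = mat 1"
| "Rinvprod R N (Suc k) x = Rinvprod R N k x ** matrix_inv (R (N + int k) x)"

lemma Rprod_inv:
  assumes "\<forall>n. invertible (R n x)"
  shows "Rprod R N k x ** Rinvprod R N k x = mat 1 \<and> Rinvprod R N k x ** Rprod R N k x = mat 1"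
proof (induction k)
  case 0 then show ?case by simp
next
  case (Suc k)
  let ?R = "R (N + int k) x" and ?P = "Rprod R N k x" and ?Q = "Rinvprod R N k x"
  have r: "?R ** matrix_inv ?R = mat 1" "matrix_inv ?R ** ?R = mat 1"
    using minv_props assms by blast+
  have "?R ** ?P ** (?Q ** matrix_inv ?R) = ?R ** (?P ** ?Q) ** matrix_inv ?R"
    by (simp add: matrix_mul_assoc)
  also have "\<dots> = mat 1" using Suc r by simp
  finally have 1: "?R ** ?P ** (?Q ** matrix_inv ?R) = mat 1" .
  have "?Q ** matrix_inv ?R ** (?R ** ?P) = ?Q ** (matrix_inv ?R ** ?R) ** ?P"
    by (simp add: matrix_mul_assoc)
  also have "\<dots> = mat 1" using Suc r by simp
  finally have 2: "?Q ** matrix_inv ?R ** (?R ** ?P) = mat 1" .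
  show ?case using 1 2 by simp
qed

lemma ratm_cong:
  assumes "rational_mat_on U F" "\<forall>x\<in>U. F x = G x"
  shows "rational_mat_on U G"
  using assms unfolding rational_mat_on_def rational_on_def by metis

lemma W1_identity:
  fixes A A' Ai A'i D' E :: "complex^'n^'n"
  assumes "A ** Ai = mat 1" "Ai ** A = mat 1" "A' ** A'i = mat 1" "A'i ** A' = mat 1"
  shows "trace (A ** A'i ** D' ** (A' ** Ai) ** (A ** E ** Ai)) = trace (D' ** (A' ** E ** A'i))"
proof -
  have c: "X ** Ai ** A = X" for X using assms(2) by (metis matrix_mul_assoc matrix_mul_rid)
  have "A ** A'i ** D' ** (A' ** Ai) ** (A ** E ** Ai) = A ** (A'i ** D' ** A' ** E) ** Ai"
    by (simp add: matrix_mul_assoc c)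
  then have "trace (A ** A'i ** D' ** (A' ** Ai) ** (A ** E ** Ai)) = trace (Ai ** (A ** (A'i ** D' ** A' ** E)))"
    using trace_mul_sym by metis
  also have "\<dots> = trace (A'i ** D' ** A' ** E)"
    by (simp add: matrix_mul_assoc assms(2))
  also have "\<dots> = trace (A'i ** (D' ** A' ** E))" by (simp add: matrix_mul_assoc)
  also have "\<dots> = trace (D' ** A' ** E ** A'i)" using trace_mul_sym by metis
  finally show ?thesis by (simp add: matrix_mul_assoc)
qed

theorem mainTheorem8:
  fixes G :: "(complex^'n^'n) set"
    and D \<Psi> R :: "int \<Rightarrow> complex \<Rightarrow> complex^'n^'n"
    and U :: "complex set" and N :: int
  assumes G: "complex_reductive_matrix_group G"
    and U: "open U" "connected U" "simply_connected U" "U \<noteq> {}"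
    and D_rat: "\<forall>n. rational_mat_on U (D n)"
    and D_g: "\<forall>n. \<forall>x\<in>U. D n x \<in> lie_algebra G"
    and Psi_G: "\<forall>n. \<forall>x\<in>U. \<Psi> n x \<in> G \<and> invertible (\<Psi> n x)"
    and Psi_ode: "\<forall>n. \<forall>x\<in>U. \<forall>i j.
        ((\<lambda>y. \<Psi> n y $ i $ j) has_field_derivative (D n x ** \<Psi> n x) $ i $ j) (at x)"
    and R_rat: "\<forall>n. rational_mat_on U (R n) \<and> (\<forall>x\<in>U. invertible (R n x)) \<and>
        rational_mat_on U (\<lambda>x. matrix_inv (R n x))"
    and Psi_step: "\<forall>n. \<forall>x\<in>U. \<Psi> (n + 1) x = R n x ** \<Psi> n x"
  shows "\<exists>\<alpha> :: nat \<Rightarrow> complex poly.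
     (\<exists>k \<le> cdim (lie_algebra G). \<alpha> k \<noteq> 0) \<and>
     (\<forall>x\<in>U. (\<Sum>k = 0..cdim (lie_algebra G). mscale (poly (\<alpha> k) x) (Dk R D N k x)) = 0) \<and>
     (\<forall>E\<in>lie_algebra G. \<forall>x\<in>U.
        (\<Sum>k = 0..cdim (lie_algebra G). poly (\<alpha> k) x * W1 D \<Psi> (N + int k) x E) = 0)"
proof -
  have mg: "matrix_group G" using G unfolding complex_reductive_matrix_group_def closed_matrix_group_def by blast
  interpret V: vector_space "mscale :: complex \<Rightarrow> complex^'n^'n \<Rightarrow> complex^'n^'n" by (rule vs)
  let ?d = "cdim (lie_algebra G)"
  have d_eq: "?d = V.dim (lie_algebra G)" unfolding cdim_def by simp
  obtain Bs where Bs: "Bs \<subseteq> lie_algebra G" "V.independent Bs" "lie_algebra G \<subseteq> V.span Bs"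
      "card Bs = V.dim (lie_algebra G)"
    by (rule V.basis_exists)
  let ?E = "\<lambda>(i::'n,j::'n). (\<chi> a b. if a = i \<and> b = j then 1 else 0) :: complex^'n^'n"
  have finBs: "finite Bs"
    using V.independent_span_bound[of "range ?E" Bs] Bs(2) all_in_span by auto
  have inv: "invertible (\<Psi> n x)" if "x\<in>U" for n x using Psi_G that by blast
  have Rinv: "\<forall>n. invertible (R n x)" if "x \<in> U" for x using R_rat that by blast
  have RP: "Rprod R N k x = \<Psi> (N + int k) x ** matrix_inv (\<Psi> N x)" if x: "x\<in>U" for k x
  proof (induction k)
    case 0 show ?case using minv_props(1)[OF inv[OF x]] by simp
  next
    case (Suc k)
    have e: "N + int (Suc k) = (N + int k) + 1" by simp
    have "\<Psi> (N + int (Suc k)) x = R (N + int k) x ** \<Psi> (N + int k) x"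
      unfolding e using Psi_step x by blast
    then show ?case using Suc by (simp add: matrix_mul_assoc)
  qed
  have Dk_eq: "Dk R D N k x = \<Psi> N x ** matrix_inv (\<Psi> (N + int k) x) ** D (N + int k) x **
      (\<Psi> (N + int k) x ** matrix_inv (\<Psi> N x))" if x: "x \<in> U" for k x
  proof -
    let ?A = "\<Psi> N x" and ?A' = "\<Psi> (N + int k) x"
    have a: "?A ** matrix_inv ?A = mat 1" "matrix_inv ?A ** ?A = mat 1"
      using minv_props inv[OF x] by blast+
    have a': "?A' ** matrix_inv ?A' = mat 1" "matrix_inv ?A' ** ?A' = mat 1"
      using minv_props inv[OF x] by blast+
    have "?A' ** matrix_inv ?A ** (?A ** matrix_inv ?A') = ?A' ** (matrix_inv ?A ** ?A) ** matrix_inv ?A'"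
      by (simp add: matrix_mul_assoc)
    also have "\<dots> = mat 1" using a a' by simp
    finally have 1: "?A' ** matrix_inv ?A ** (?A ** matrix_inv ?A') = mat 1" .
    have "?A ** matrix_inv ?A' ** (?A' ** matrix_inv ?A) = ?A ** (matrix_inv ?A' ** ?A') ** matrix_inv ?A"
      by (simp add: matrix_mul_assoc)
    also have "\<dots> = mat 1" using a a' by simp
    finally have 2: "?A ** matrix_inv ?A' ** (?A' ** matrix_inv ?A) = mat 1" .
    have "matrix_inv (Rprod R N k x) = ?A ** matrix_inv ?A'"
      unfolding RP[OF x] by (rule minv_unique[OF 1 2])
    then show ?thesis unfolding Dk_def RP[OF x] by simp
  qed
  have Dk_lie: "Dk R D N k x \<in> lie_algebra G" if x: "x \<in> U" for k x
  proof -
    let ?A = "\<Psi> N x" and ?A' = "\<Psi> (N + int k) x"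
    have inG: "?A \<in> G" "?A' \<in> G" using Psi_G x by blast+
    have iG: "matrix_inv ?A \<in> G" "matrix_inv ?A' \<in> G" using mg inG unfolding matrix_group_def by blast+
    have g: "?A ** matrix_inv ?A' \<in> G" "?A' ** matrix_inv ?A \<in> G"
      using mg inG iG unfolding matrix_group_def by blast+
    have a: "?A ** matrix_inv ?A = mat 1" "matrix_inv ?A ** ?A = mat 1"
      using minv_props inv[OF x] by blast+
    have a': "?A' ** matrix_inv ?A' = mat 1" "matrix_inv ?A' ** ?A' = mat 1"
      using minv_props inv[OF x] by blast+
    have "?A ** matrix_inv ?A' ** (?A' ** matrix_inv ?A) = ?A ** (matrix_inv ?A' ** ?A') ** matrix_inv ?A"
      by (simp add: matrix_mul_assoc)
    also have "\<dots> = mat 1" using a a' by simp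
    finally have gh: "?A ** matrix_inv ?A' ** (?A' ** matrix_inv ?A) = mat 1" .
    show ?thesis unfolding Dk_eq[OF x]
      by (rule conj_lie[OF mg g(1) g(2) gh]) (use D_g x in blast)
  qed
  have W1_eq: "W1 D \<Psi> (N + int k) x E = trace (Dk R D N k x ** Mfun \<Psi> N x E)" if x: "x \<in> U" for k x E
  proof -
    let ?A = "\<Psi> N x" and ?A' = "\<Psi> (N + int k) x"
    have a: "?A ** matrix_inv ?A = mat 1" "matrix_inv ?A ** ?A = mat 1"
      using minv_props inv[OF x] by blast+
    have a': "?A' ** matrix_inv ?A' = mat 1" "matrix_inv ?A' ** ?A' = mat 1"
      using minv_props inv[OF x] by blast+
    show ?thesis unfolding W1_def Mfun_def Dk_eq[OF x]
      using W1_identity[OF a a'] by (simp add: matrix_mul_assoc)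
  qed
  have rRp: "rational_mat_on U (Rprod R N k)" for k
  proof (induction k)
    case 0 then show ?case using ratm_const[of U "mat 1"] by simp
  next
    case (Suc k)
    have "Rprod R N (Suc k) = (\<lambda>x. R (N + int k) x ** Rprod R N k x)" by (rule ext) simp
    then show ?case using ratm_mult[of U "R (N + int k)" "Rprod R N k"] Suc R_rat by simp
  qed
  have rRi: "rational_mat_on U (Rinvprod R N k)" for k
  proof (induction k)
    case 0 then show ?case using ratm_const[of U "mat 1"] by simp
  next
    case (Suc k)
    have "Rinvprod R N (Suc k) = (\<lambda>x. Rinvprod R N k x ** matrix_inv (R (N + int k) x))" by (rule ext) simp
    then show ?case using ratm_mult[of U "Rinvprod R N k" "\<lambda>x. matrix_inv (R (N + int k) x)"] Suc R_rat by simp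
  qed
  have rDk: "rational_mat_on U (Dk R D N k)" for k
  proof -
    have r: "rational_mat_on U (\<lambda>x. Rinvprod R N k x ** D (N + int k) x ** Rprod R N k x)"
      by (intro ratm_mult rRi rRp) (use D_rat in blast)
    have "\<forall>x\<in>U. Rinvprod R N k x ** D (N + int k) x ** Rprod R N k x = Dk R D N k x"
    proof
      fix x assume x: "x \<in> U"
      have "matrix_inv (Rprod R N k x) = Rinvprod R N k x"
        using Rprod_inv[of R x N k] Rinv[OF x] minv_unique by blast
      then show "Rinvprod R N k x ** D (N + int k) x ** Rprod R N k x = Dk R D N k x"
        unfolding Dk_def by simp
    qed
    then show ?thesis using ratm_cong[OF r] by blast
  qed
  define T where "T = {0..?d} \<times> (UNIV :: ('n \<times> 'n) set)"
  define f where "f t x = Dk R D N (fst t) x $ fst (snd t) $ snd (snd t)" for t x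
  have "\<forall>t\<in>T. rational_on U (f t)"
    unfolding f_def using rDk unfolding rational_mat_on_def by blast
  then obtain q P where qP: "\<forall>x\<in>U. poly q x \<noteq> 0" "\<forall>t\<in>T. \<forall>x\<in>U. f t x = poly (P t) x / poly q x"
    using common_denom[of T U f] unfolding T_def by auto
  have infU: "infinite U"
  proof -
    obtain x0 where "x0 \<in> U" using U(4) by blast
    then have "infinite (U \<inter> UNIV)" using islimpt_UNIV[of x0] islimpt_eq_acc_point U(1) by blast
    then show ?thesis by simp
  qed
  have hyp: "\<forall>k\<in>{0..?d}. \<forall>x\<in>U. \<exists>c. \<forall>ij\<in>(UNIV :: ('n \<times> 'n) set).
      poly (P (k, ij)) x = (\<Sum>b\<in>Bs. c b * b $ fst ij $ snd ij)"
  proof (intro ballI)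
    fix k x assume k: "k \<in> {0..?d}" and x: "x \<in> U"
    have "Dk R D N k x \<in> V.span Bs" using Dk_lie[OF x] Bs(3) by blast
    then obtain u where u: "Dk R D N k x = (\<Sum>v\<in>Bs. mscale (u v) v)"
      using V.span_finite[OF finBs] by auto
    show "\<exists>c. \<forall>ij\<in>(UNIV :: ('n \<times> 'n) set). poly (P (k, ij)) x = (\<Sum>b\<in>Bs. c b * b $ fst ij $ snd ij)"
    proof (intro exI[of _ "\<lambda>b. poly q x * u b"] ballI)
      fix ij :: "'n \<times> 'n"
      have "(k, ij) \<in> T" using k unfolding T_def by auto
      then have "Dk R D N k x $ fst ij $ snd ij = poly (P (k, ij)) x / poly q x"
        using qP(2) x unfolding f_def by auto
      then have "poly (P (k, ij)) x = poly q x * (Dk R D N k x $ fst ij $ snd ij)"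
        using qP(1) x by (simp add: field_simps)
      also have "\<dots> = (\<Sum>b\<in>Bs. poly q x * u b * b $ fst ij $ snd ij)"
        unfolding u by (simp add: sum_component mscale_def sum_distrib_left mult.assoc)
      finally show "poly (P (k, ij)) x = (\<Sum>b\<in>Bs. poly q x * u b * b $ fst ij $ snd ij)" .
    qed
  qed
  have cardlt: "card Bs < card {0..?d}" using Bs(4) d_eq by simp
  obtain c where c: "\<exists>k\<in>{0..?d}. c k \<noteq> 0"
      "\<forall>ij\<in>(UNIV :: ('n \<times> 'n) set). (\<Sum>k\<in>{0..?d}. c k * P (k, ij)) = 0"
    using poly_relation[where I="UNIV :: ('n \<times> 'n) set" and J="{0..?d}" and K=Bs and S=U
        and p="\<lambda>k ij. P (k, ij)" and B="\<lambda>b ij. b $ fst ij $ snd ij"] finBs cardlt infU hyp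
    by auto
  have sum0: "(\<Sum>k = 0..?d. mscale (poly (c k) x) (Dk R D N k x)) = 0" if x: "x \<in> U" for x
  proof -
    have "(\<Sum>k = 0..?d. poly (c k) x * (Dk R D N k x $ a $ b)) = 0" for a b
    proof -
      have "(\<Sum>k = 0..?d. poly (c k) x * (Dk R D N k x $ a $ b)) =
          (\<Sum>k = 0..?d. poly (c k) x * (poly (P (k, (a, b))) x / poly q x))"
      proof (rule sum.cong[OF refl])
        fix k assume k: "k \<in> {0..?d}"
        have "(k, (a, b)) \<in> T" using k unfolding T_def by auto
        then show "poly (c k) x * (Dk R D N k x $ a $ b) = poly (c k) x * (poly (P (k, (a, b))) x / poly q x)"
          using qP(2) x unfolding f_def by auto
      qed
      also have "\<dots> = poly (\<Sum>k = 0..?d. c k * P (k, (a, b))) x / poly q x"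
        by (simp add: poly_sum sum_divide_distrib)
      also have "\<dots> = 0" using c(2) by simp
      finally show ?thesis .
    qed
    then show ?thesis by (simp add: vec_eq_iff sum_component mscale_def)
  qed
  show ?thesis
  proof (intro exI[of _ c] conjI)
    show "\<exists>k\<le>?d. c k \<noteq> 0" using c(1) by auto
    show "\<forall>x\<in>U. (\<Sum>k = 0..?d. mscale (poly (c k) x) (Dk R D N k x)) = 0" using sum0 by blast
    show "\<forall>E\<in>lie_algebra G. \<forall>x\<in>U. (\<Sum>k = 0..?d. poly (c k) x * W1 D \<Psi> (N + int k) x E) = 0"
    proof (intro ballI)
      fix E x assume x: "x \<in> U"
      have "(\<Sum>k = 0..?d. poly (c k) x * W1 D \<Psi> (N + int k) x E) =
          (\<Sum>k = 0..?d. poly (c k) x * trace (Dk R D N k x ** Mfun \<Psi> N x E))"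
        using W1_eq[OF x] by simp
      also have "\<dots> = trace ((\<Sum>k = 0..?d. mscale (poly (c k) x) (Dk R D N k x)) ** Mfun \<Psi> N x E)"
        by (rule trace_comb)
      also have "\<dots> = 0" unfolding sum0[OF x] by (simp add: trace_def matrix_matrix_mult_def)
      finally show "(\<Sum>k = 0..?d. poly (c k) x * W1 D \<Psi> (N + int k) x E) = 0" .
    qed
  qed
qed


end
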